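(* Let $X$ be a series-parallel poset, write $Z_X(x)=\sum_{i=1}^{|X|}c_i\frac{x^i}{(1-x)^{i+1}}$, and let $h^*(x)=\sum_{j=0}^{|X|}h^*_jx^j:=\frac{(1-x)^{|X|+1}}{x}Z^+_X(x)$. Then for every $0\le j\le |X|$, \[ h^*_j=\sum_{i=1}^{|X|-j}(-1)^{|X|-i+j}\,c_i\binom{|X|-i}{j}, \] and $c_{|X|}=\sum_{i=0}^{|X|}h^*_i$.
   Context: For $n\ge1$, $\langle n\rangle$ is the chain $1<\dots<n$. For a finite poset $X$, $\Omega(X,n)$ (resp. $\Omega^+(X,n)$) is the number of maps $f:X\to\langle n\rangle$ with $u<v\Rightarrow f(u)<f(v)$ (resp. $u\le v\Rightarrow f(u)\le f(v)$); $Z_X(x)=\sum_{n\ge1}\Omega(X,n)x^n$, $Z^+_X(x)=\sum_{n\ge1}\Omega^+(X,n)x^n$. For a series-parallel poset, $Z_X$ is a finite linear combination $\sum_{i=1}^{|X|}c_i x^i/(1-x)^{i+1}$ (the $c_i$ are uniquely determined). The concatenation $\mu(Y,W)$ is the disjoint union of $Y$ and $W$ with every element of $Y$ below every element of $W$; $Y\sqcup W$ is the disjoint union with no relations. Series-parallel posets form the smallest class of finite posets containing the one-element poset and closed under $\mu$ and $\sqcup$. *)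

theory Defs
  imports "HOL-Library.FuncSet" "HOL-Computational_Algebra.Formal_Power_Series"
begin

text \<open>A finite poset is represented by a carrier set A and its strict order
  relation R (a set of pairs, R \<subseteq> A \<times> A); u \<le> v means u = v or (u,v) \<in> R.\<close>

inductive series_parallel :: "'a set \<Rightarrow> ('a \<times> 'a) set \<Rightarrow> bool" where
  sp_single: "series_parallel {a} {}"
| sp_par: "series_parallel A R \<Longrightarrow> series_parallel B S \<Longrightarrow> A \<inter> B = {}
            \<Longrightarrow> series_parallel (A \<union> B) (R \<union> S)"
| sp_ser: "series_parallel A R \<Longrightarrow> series_parallel B S \<Longrightarrow> A \<inter> B = {}
            \<Longrightarrow> series_parallel (A \<union> B) (R \<union> S \<union> A \<times> B)"

definition Omega :: "'a set \<Rightarrow> ('a \<times> 'a) set \<Rightarrow> nat \<Rightarrow> nat" where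
  "Omega A R n = card {f \<in> A \<rightarrow>\<^sub>E {1..n}. \<forall>u\<in>A. \<forall>v\<in>A. (u, v) \<in> R \<longrightarrow> f u < f v}"

definition Omega_plus :: "'a set \<Rightarrow> ('a \<times> 'a) set \<Rightarrow> nat \<Rightarrow> nat" where
  "Omega_plus A R n = card {f \<in> A \<rightarrow>\<^sub>E {1..n}.
      \<forall>u\<in>A. \<forall>v\<in>A. (u = v \<or> (u, v) \<in> R) \<longrightarrow> f u \<le> f v}"

definition ZX :: "'a set \<Rightarrow> ('a \<times> 'a) set \<Rightarrow> real fps" where
  "ZX A R = Abs_fps (\<lambda>n. if n \<ge> 1 then real (Omega A R n) else 0)"

definition ZX_plus :: "'a set \<Rightarrow> ('a \<times> 'a) set \<Rightarrow> real fps" where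
  "ZX_plus A R = Abs_fps (\<lambda>n. if n \<ge> 1 then real (Omega_plus A R n) else 0)"

text \<open>h^*(x) = (1-x)^(|X|+1) / x * Z^+_X(x); division by x is fps_shift 1
  (Z^+_X has zero constant term).\<close>
definition hstar :: "'a set \<Rightarrow> ('a \<times> 'a) set \<Rightarrow> real fps" where
  "hstar A R = fps_shift 1 ((1 - fps_X) ^ (card A + 1) * ZX_plus A R)"

end

theory Submission
  imports Defs "HOL-Computational_Algebra.Polynomial"
begin

definition Gpoly :: "nat \<Rightarrow> real poly" where
  "Gpoly k = smult (1 / fact k) (\<Prod>i = 0..<k. [:- of_nat i, 1:])"

lemma poly_Gpoly: "poly (Gpoly k) x = x gchoose k"
proof -
  have "poly (Gpoly k) x = (\<Prod>i = 0..<k. x - of_nat i) / fact k"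
    by (simp add: Gpoly_def poly_prod)
  also have "\<dots> = x gchoose k" by (simp add: gbinomial_mult_fact[symmetric])
  finally show ?thesis .
qed

lemma degree_Gpoly: "degree (Gpoly k) = k"
  unfolding Gpoly_def by (simp add: degree_prod_eq_sum_degree)

lemma coeff_Gpoly: "coeff (Gpoly k) k = 1 / fact k"
proof -
  have d: "degree (\<Prod>i = 0..<k. [:- real i, 1:]) = k" by (simp add: degree_prod_eq_sum_degree)
  have "lead_coeff (\<Prod>i = 0..<k. [:- real i, 1:]) = 1" by (simp add: lead_coeff_prod)
  then show ?thesis using d unfolding Gpoly_def by simp
qed

lemma expansion: fixes P :: "real poly" shows "\<exists>a. \<forall>x. poly P x = (\<Sum>i\<le>degree P. a i * (x gchoose i))"
proof (induction "degree P" arbitrary: P rule: less_induct)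
  case less
  show ?case
  proof (cases "degree P = 0")
    case True
    then obtain c where "P = [:c:]" by (rule degree_eq_zeroE)
    then show ?thesis by (intro exI[of _ "\<lambda>_. c"]) simp
  next
    case False
    define d where "d = degree P"
    define Q where "Q = P - smult (coeff P d * fact d) (Gpoly d)"
    have "degree Q \<le> d" unfolding Q_def d_def
      using degree_smult_le[of _ "Gpoly (degree P)"] by (intro degree_diff_le) (auto simp: degree_Gpoly)
    moreover have "coeff Q d = 0" by (simp add: Q_def coeff_Gpoly)
    ultimately have "degree Q < d" using False d_def
    proof -
      have "degree Q \<noteq> d"
      proof
        assume h: "degree Q = d"
        then have "Q \<noteq> 0" using False d_def by auto
        then show False using h \<open>coeff Q d = 0\<close> by (metis leading_coeff_0_iff)
      qed
      then show ?thesis using \<open>degree Q \<le> d\<close> by simp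
    qed
    then obtain a where a: "\<forall>x. poly Q x = (\<Sum>i\<le>degree Q. a i * (x gchoose i))"
      using less d_def by blast
    define b where "b = (\<lambda>i. (if i \<le> degree Q then a i else 0) + (if i = d then coeff P d * fact d else 0))"
    show ?thesis
    proof (intro exI allI)
      fix x
      have 1: "poly P x = poly Q x + coeff P d * fact d * (x gchoose d)"
        by (simp add: Q_def poly_Gpoly)
      have 2: "poly Q x = (\<Sum>i\<le>d. (if i \<le> degree Q then a i else 0) * (x gchoose i))"
        unfolding a[rule_format] using \<open>degree Q < d\<close>
        by (intro sum.mono_neutral_cong_left) auto
      have 3: "(\<Sum>i\<le>d. (if i = d then coeff P d * fact d else 0) * (x gchoose i))
         = coeff P d * fact d * (x gchoose d)"
        by (simp add: if_distrib[of "\<lambda>y. y * _"] sum.delta cong: if_cong)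
      show "poly P x = (\<Sum>i\<le>degree P. b i * (x gchoose i))"
        unfolding b_def distrib_right sum.distrib d_def[symmetric] 1 2 3 ..
    qed
  qed
qed


lemma N1: "(\<Sum>t = 1..n. ((t - 1) choose p) * ((n - t) choose j)) = n choose (p + j + 1)"
proof (induction n arbitrary: j)
  case 0 then show ?case by simp
next
  case (Suc n)
  show ?case
  proof (cases j)
    case 0
    have "(\<Sum>t = 1..Suc n. ((t - 1) choose p)) = (\<Sum>k\<le>n. k choose p)"
      by (rule sum.reindex_bij_witness[of _ "\<lambda>k. k + 1" "\<lambda>t. t - 1"]) auto
    then show ?thesis using 0 by (simp add: sum_choose_upper)
  next
    case (Suc j')
    have "(\<Sum>t = 1..Suc n. ((t - 1) choose p) * ((Suc n - t) choose j))
        = (\<Sum>t = 1..n. ((t - 1) choose p) * ((Suc n - t) choose j))"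
      using Suc by (simp add: sum.atLeast_Suc_atMost_Suc_shift)
    also have "\<dots> = (\<Sum>t = 1..n. ((t - 1) choose p) * ((n - t) choose j') + ((t - 1) choose p) * ((n - t) choose j))"
      by (intro sum.cong refl) (simp add: Suc Suc_diff_le algebra_simps)
    also have "\<dots> = (n choose (p + j' + 1)) + (n choose (p + j + 1))"
      unfolding sum.distrib Suc.IH by simp
    also have "\<dots> = Suc n choose (p + j + 1)" using Suc by simp
    finally show ?thesis .
  qed
qed

lemma N2: "(\<Sum>t = 1..n. ((t - 1 + p) choose p) * ((n - t + j) choose j)) = (n + p + j) choose (p + j + 1)"
proof (induction j arbitrary: n)
  case 0
  have "(\<Sum>t = 1..n. ((t - 1 + p) choose p)) = (\<Sum>k<n. (p + k) choose p)"
    by (rule sum.reindex_bij_witness[of _ "\<lambda>k. k + 1" "\<lambda>t. t - 1"]) (auto simp: add.commute)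
  also have "\<dots> = (n + p) choose (p + 1)"
  proof (cases n)
    case 0 then show ?thesis by simp
  next
    case (Suc m)
    then have "{..<n} = {..m}" by auto
    then show ?thesis using choose_rising_sum(1)[of p m] Suc by (simp add: add.commute)
  qed
  finally show ?case by simp
next
  case (Suc j')
  note outer = Suc.IH
  show ?case
  proof (induction n)
    case 0 then show ?case by simp
  next
    case (Suc n)
    have "(\<Sum>t = 1..Suc n. ((t - 1 + p) choose p) * ((Suc n - t + Suc j') choose Suc j'))
       = (\<Sum>t = 1..Suc n. ((t - 1 + p) choose p) * ((Suc n - t + j') choose j')
          + ((t - 1 + p) choose p) * (if t \<le> n then (n - t + Suc j') choose Suc j' else 0))"
      by (intro sum.cong refl) (auto simp: Suc_diff_le algebra_simps)
    also have "\<dots> = ((Suc n + p + j') choose (p + j' + 1)) + (\<Sum>t = 1..n. ((t - 1 + p) choose p) * ((n - t + Suc j') choose Suc j'))"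
    proof -
      have "(\<Sum>t = 1..Suc n. ((t - 1 + p) choose p) * (if t \<le> n then (n - t + Suc j') choose Suc j' else 0))
          = (\<Sum>t = 1..n. ((t - 1 + p) choose p) * ((n - t + Suc j') choose Suc j'))"
        by (simp add: sum.atLeast_Suc_atMost_Suc_shift)
      then show ?thesis unfolding sum.distrib outer by simp
    qed
    also have "\<dots> = Suc n + p + Suc j' choose (p + Suc j' + 1)"
      unfolding Suc.IH by simp
    finally show ?case .
  qed
qed


lemma expansion_K:
  fixes P :: "real poly"
  assumes "degree P \<le> K"
  shows "\<exists>a. \<forall>x. poly P x = (\<Sum>i\<le>K. a i * (x gchoose i))"
proof -
  obtain a where a: "\<forall>x. poly P x = (\<Sum>i\<le>degree P. a i * (x gchoose i))" using expansion by blast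
  show ?thesis
  proof (intro exI allI)
    fix x
    show "poly P x = (\<Sum>i\<le>K. (if i \<le> degree P then a i else 0) * (x gchoose i))"
      unfolding a[rule_format] using assms by (intro sum.mono_neutral_cong_left) auto
  qed
qed

lemma T1:
  assumes "i \<ge> 1"
  shows "(\<Sum>t = 1..n. (real (t choose i) - real ((t - 1) choose i)) * real ((n - t) choose j)) = real (n choose (i + j))"
proof -
  have "(\<Sum>t = 1..n. (real (t choose i) - real ((t - 1) choose i)) * real ((n - t) choose j))
      = real (\<Sum>t = 1..n. ((t - 1) choose (i - 1)) * ((n - t) choose j))"
    unfolding of_nat_sum
  proof (intro sum.cong refl)
    fix t assume "t \<in> {1..n}"
    then obtain t' where t: "t = Suc t'" by (cases t) auto
    obtain i' where i: "i = Suc i'" using assms by (cases i) auto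
    show "(real (t choose i) - real ((t - 1) choose i)) * real ((n - t) choose j) = real (((t - 1) choose (i - 1)) * ((n - t) choose j))"
      unfolding t i by simp
  qed
  also have "(\<Sum>t = 1..n. ((t - 1) choose (i - 1)) * ((n - t) choose j)) = n choose (i + j)"
    using N1[where n=n and p="i - 1" and j=j] assms by simp
  hence "real (\<Sum>t = 1..n. ((t - 1) choose (i - 1)) * ((n - t) choose j)) = real (n choose (i + j))" by (simp only:)
  finally show ?thesis .
qed

lemma T2:
  assumes "i \<ge> 1" "t \<ge> 1"
  shows "(- real t gchoose i) - (- real (t - 1) gchoose i) = (-1) ^ i * real ((t - 1 + (i - 1)) choose (i - 1))"
proof -
  obtain i' where i: "i = Suc i'" using assms by (cases i) auto
  have "- real (t - 1) = - real t + 1" using assms by (simp add: of_nat_diff)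
  then have "(- real (t - 1) gchoose i) = (- real t gchoose i') + (- real t gchoose i)"
    unfolding i using gbinomial_Suc_Suc[of "- real t" i'] by (simp add: add.commute)
  then have "(- real t gchoose i) - (- real (t - 1) gchoose i) = - (- real t gchoose i')" by simp
  also have "\<dots> = - ((-1) ^ i' * ((real t + real i' - 1) gchoose i'))" by (simp add: gbinomial_minus)
  also have "(real t + real i' - 1) = real (t - 1 + i')" using assms by (simp add: of_nat_diff)
  finally show ?thesis unfolding i by (simp add: binomial_gbinomial)
qed

lemma T3:
  assumes "m \<ge> 1"
  shows "(- real m gchoose j) = (-1) ^ j * real ((m - 1 + j) choose j)"
proof -
  have "(- real m gchoose j) = (-1) ^ j * ((real m + real j - 1) gchoose j)" by (simp add: gbinomial_minus)
  also have "(real m + real j - 1) = real (m - 1 + j)" using assms by (simp add: of_nat_diff)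
  finally show ?thesis by (simp add: binomial_gbinomial)
qed

lemma bilin:
  fixes \<alpha> \<beta> :: "nat \<Rightarrow> real"
  shows "(\<Sum>t\<in>T. (\<Sum>i\<le>K. \<alpha> i * f t i) * (\<Sum>j\<le>K. \<beta> j * g t j))
       = (\<Sum>i\<le>K. \<Sum>j\<le>K. \<alpha> i * \<beta> j * (\<Sum>t\<in>T. f t i * g t j))"
proof -
  have "(\<Sum>t\<in>T. (\<Sum>i\<le>K. \<alpha> i * f t i) * (\<Sum>j\<le>K. \<beta> j * g t j))
      = (\<Sum>t\<in>T. \<Sum>i\<le>K. \<Sum>j\<le>K. \<alpha> i * \<beta> j * (f t i * g t j))"
    by (simp add: sum_product algebra_simps)
  also have "\<dots> = (\<Sum>i\<le>K. \<Sum>t\<in>T. \<Sum>j\<le>K. \<alpha> i * \<beta> j * (f t i * g t j))"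
    by (rule sum.swap)
  also have "\<dots> = (\<Sum>i\<le>K. \<Sum>j\<le>K. \<Sum>t\<in>T. \<alpha> i * \<beta> j * (f t i * g t j))"
    by (intro sum.cong refl) (rule sum.swap)
  also have "\<dots> = (\<Sum>i\<le>K. \<Sum>j\<le>K. \<alpha> i * \<beta> j * (\<Sum>t\<in>T. f t i * g t j))"
    by (simp add: sum_distrib_left)
  finally show ?thesis .
qed

lemma TW:
  assumes "i \<ge> 1" "n \<ge> 1"
  shows "(\<Sum>t = 1..n. ((- real t gchoose i) - (- real (t - 1) gchoose i)) * (- real (n + 1 - t) gchoose j))
       = (- real n gchoose (i + j))"
proof -
  have "(\<Sum>t = 1..n. ((- real t gchoose i) - (- real (t - 1) gchoose i)) * (- real (n + 1 - t) gchoose j))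
      = (\<Sum>t = 1..n. (-1) ^ (i + j) * real (((t - 1 + (i - 1)) choose (i - 1)) * ((n - t + j) choose j)))"
  proof (intro sum.cong refl)
    fix t assume t: "t \<in> {1..n}"
    have "(- real (n + 1 - t) gchoose j) = (-1) ^ j * real ((n + 1 - t - 1 + j) choose j)"
      using t by (intro T3) auto
    moreover have "n + 1 - t - 1 = n - t" by simp
    ultimately show "((- real t gchoose i) - (- real (t - 1) gchoose i)) * (- real (n + 1 - t) gchoose j)
        = (-1) ^ (i + j) * real (((t - 1 + (i - 1)) choose (i - 1)) * ((n - t + j) choose j))"
      using T2[OF assms(1), of t] t by (simp add: power_add)
  qed
  also have "\<dots> = (-1) ^ (i + j) * real (\<Sum>t = 1..n. ((t - 1 + (i - 1)) choose (i - 1)) * ((n - t + j) choose j))"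
    by (simp add: sum_distrib_left)
  also have "(\<Sum>t = 1..n. ((t - 1 + (i - 1)) choose (i - 1)) * ((n - t + j) choose j)) = (n - 1 + (i + j)) choose (i + j)"
    using N2[where n=n and p="i - 1" and j=j] assms by (simp add: algebra_simps)
  also have "(-1) ^ (i + j) * real ((n - 1 + (i + j)) choose (i + j)) = (- real n gchoose (i + j))"
    using T3[OF assms(2), of "i + j"] by simp
  finally show ?thesis .
qed

lemma coeff0_from_zero:
  fixes \<alpha> :: "nat \<Rightarrow> real"
  assumes "\<And>x. poly P x = (\<Sum>i\<le>K. \<alpha> i * (x gchoose i))" "poly P 0 = 0"
  shows "\<alpha> 0 = 0"
proof -
  have "(\<Sum>i\<le>K. \<alpha> i * ((0::real) gchoose i)) = (\<Sum>i\<le>K. if i = 0 then \<alpha> i else 0)"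
    by (intro sum.cong refl) (auto simp: gbinomial_0 elim!: Suc_le_D[THEN exE] dest!: gr0_implies_Suc)
  then show ?thesis using assms by simp
qed

lemma series_alg:
  fixes PA PB :: "real poly"
  assumes A0: "poly PA 0 = 0" and B0: "poly PB 0 = 0"
  shows "\<exists>P. (\<forall>n. (\<Sum>t = 1..n. (poly PA (real t) - poly PA (real (t - 1))) * poly PB (real (n - t))) = poly P (real n))
         \<and> (\<forall>n. (\<Sum>t = 1..n. (poly PA (- real t) - poly PA (- real (t - 1))) * poly PB (- real (n + 1 - t))) = poly P (- real n))"
proof -
  define K where "K = max (degree PA) (degree PB)"
  obtain \<alpha> where \<alpha>: "\<And>x. poly PA x = (\<Sum>i\<le>K. \<alpha> i * (x gchoose i))"
    using expansion_K[of PA K] K_def by auto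
  obtain \<beta> where \<beta>: "\<And>x. poly PB x = (\<Sum>i\<le>K. \<beta> i * (x gchoose i))"
    using expansion_K[of PB K] K_def by auto
  have a0: "\<alpha> 0 = 0" by (rule coeff0_from_zero[OF \<alpha> A0])
  define P where "P = (\<Sum>i\<le>K. \<Sum>j\<le>K. smult (\<alpha> i * \<beta> j) (Gpoly (i + j)))"
  have Pev: "poly P x = (\<Sum>i\<le>K. \<Sum>j\<le>K. \<alpha> i * \<beta> j * (x gchoose (i + j)))" for x
    by (simp add: P_def poly_sum poly_Gpoly)
  have S: "(\<Sum>t = 1..n. (poly PA (real t) - poly PA (real (t - 1))) * poly PB (real (n - t))) = poly P (real n)" for n
  proof -
    have "(\<Sum>t = 1..n. (poly PA (real t) - poly PA (real (t - 1))) * poly PB (real (n - t)))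
       = (\<Sum>t = 1..n. (\<Sum>i\<le>K. \<alpha> i * (real (t choose i) - real ((t - 1) choose i))) * (\<Sum>j\<le>K. \<beta> j * real ((n - t) choose j)))"
      by (simp add: \<alpha> \<beta> binomial_gbinomial sum_subtractf right_diff_distrib)
    also have "\<dots> = (\<Sum>i\<le>K. \<Sum>j\<le>K. \<alpha> i * \<beta> j * (\<Sum>t = 1..n. (real (t choose i) - real ((t - 1) choose i)) * real ((n - t) choose j)))"
      by (rule bilin)
    also have "\<dots> = (\<Sum>i\<le>K. \<Sum>j\<le>K. \<alpha> i * \<beta> j * (real n gchoose (i + j)))"
    proof (intro sum.cong refl)
      fix i j
      show "\<alpha> i * \<beta> j * (\<Sum>t = 1..n. (real (t choose i) - real ((t - 1) choose i)) * real ((n - t) choose j))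
          = \<alpha> i * \<beta> j * (real n gchoose (i + j))"
      proof (cases "i = 0")
        case True then show ?thesis by (simp add: a0)
      next
        case False then show ?thesis using T1[of i n j] by (simp add: binomial_gbinomial)
      qed
    qed
    finally show ?thesis by (simp add: Pev)
  qed
  have W: "(\<Sum>t = 1..n. (poly PA (- real t) - poly PA (- real (t - 1))) * poly PB (- real (n + 1 - t))) = poly P (- real n)" for n
  proof (cases "n = 0")
    case True
    have "poly P 0 = 0" unfolding Pev
    proof (rule sum.neutral, rule ballI)
      fix i assume "i \<in> {..K}"
      show "(\<Sum>j\<le>K. \<alpha> i * \<beta> j * (0 gchoose (i + j))) = 0"
      proof (cases i)
        case 0 then show ?thesis by (simp add: a0)
      next
        case (Suc i') then show ?thesis by (simp add: gbinomial_0)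
      qed
    qed
    then show ?thesis using True by simp
  next
    case False
    have "(\<Sum>t = 1..n. (poly PA (- real t) - poly PA (- real (t - 1))) * poly PB (- real (n + 1 - t)))
       = (\<Sum>t = 1..n. (\<Sum>i\<le>K. \<alpha> i * ((- real t gchoose i) - (- real (t - 1) gchoose i))) * (\<Sum>j\<le>K. \<beta> j * (- real (n + 1 - t) gchoose j)))"
      by (simp add: \<alpha> \<beta> sum_subtractf right_diff_distrib)
    also have "\<dots> = (\<Sum>i\<le>K. \<Sum>j\<le>K. \<alpha> i * \<beta> j * (\<Sum>t = 1..n. ((- real t gchoose i) - (- real (t - 1) gchoose i)) * (- real (n + 1 - t) gchoose j)))"
      by (rule bilin)
    also have "\<dots> = (\<Sum>i\<le>K. \<Sum>j\<le>K. \<alpha> i * \<beta> j * (- real n gchoose (i + j)))"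
    proof (intro sum.cong refl)
      fix i j
      show "\<alpha> i * \<beta> j * (\<Sum>t = 1..n. ((- real t gchoose i) - (- real (t - 1) gchoose i)) * (- real (n + 1 - t) gchoose j))
          = \<alpha> i * \<beta> j * (- real n gchoose (i + j))"
      proof (cases "i = 0")
        case True then show ?thesis by (simp add: a0)
      next
        case False then show ?thesis using TW[of i n j] \<open>n \<noteq> 0\<close> by simp
      qed
    qed
    finally show ?thesis by (simp add: Pev)
  qed
  show ?thesis using S W by blast
qed


definition SS :: "nat \<Rightarrow> 'a set \<Rightarrow> ('a \<times> 'a) set \<Rightarrow> nat \<Rightarrow> nat \<Rightarrow> ('a \<Rightarrow> nat) set" where
  "SS k A R L H = {f \<in> A \<rightarrow>\<^sub>E {L..H}. \<forall>u\<in>A. \<forall>v\<in>A. (u, v) \<in> R \<longrightarrow> f u + k \<le> f v}"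

definition mrg :: "'a set \<Rightarrow> ('a \<Rightarrow> 'b) \<Rightarrow> ('a \<Rightarrow> 'b) \<Rightarrow> 'a \<Rightarrow> 'b" where
  "mrg A g h = (\<lambda>x. if x \<in> A then g x else h x)"

lemma Omega_SS: "Omega A R n = card (SS 1 A R 1 n)"
  unfolding Omega_def SS_def by (simp add: Suc_le_eq)

lemma Omega_plus_SS: "Omega_plus A R n = card (SS 0 A R 1 n)"
  unfolding Omega_plus_def SS_def by (rule arg_cong[where f=card]) auto

lemma finite_SS: "finite A \<Longrightarrow> finite (SS k A R L H)"
  unfolding SS_def by (rule finite_subset[OF _ finite_PiE[of A "\<lambda>_. {L..H}"]]) auto

lemma SS_mono: "H \<le> H' \<Longrightarrow> SS k A R L H \<subseteq> SS k A R L H'"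
  unfolding SS_def by (auto simp: PiE_iff)

lemma sp_inv: "series_parallel A R \<Longrightarrow> finite A \<and> A \<noteq> {} \<and> R \<subseteq> A \<times> A"
  by (induction rule: series_parallel.induct) auto

lemma card_SS_single: "card (SS k {a} {} 1 n) = n"
proof -
  have "SS k {a} {} 1 n = {a} \<rightarrow>\<^sub>E {1..n}" unfolding SS_def by auto
  then show ?thesis by (simp add: card_PiE)
qed

lemma card_shift: "card (SS k A R (s + 1) (s + m)) = card (SS k A R 1 m)"
proof -
  let ?h = "\<lambda>g. restrict (\<lambda>x. g x + s) A"
  have inj: "inj_on ?h (SS k A R 1 m)"
  proof (rule inj_onI)
    fix f g assume f: "f \<in> SS k A R 1 m" and g: "g \<in> SS k A R 1 m" and eq: "?h f = ?h g"
    show "f = g"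
    proof (rule ext)
      fix x show "f x = g x"
      proof (cases "x \<in> A")
        case True then show ?thesis using fun_cong[OF eq, of x] by simp
      next
        case False then show ?thesis using f g by (simp add: SS_def PiE_def extensional_def)
      qed
    qed
  qed
  have im: "?h ` SS k A R 1 m = SS k A R (s + 1) (s + m)"
  proof
    show "?h ` SS k A R 1 m \<subseteq> SS k A R (s + 1) (s + m)"
      unfolding SS_def by (auto simp: PiE_iff)
  next
    show "SS k A R (s + 1) (s + m) \<subseteq> ?h ` SS k A R 1 m"
    proof
      fix f assume f: "f \<in> SS k A R (s + 1) (s + m)"
      let ?g = "restrict (\<lambda>x. f x - s) A"
      have "?g \<in> SS k A R 1 m" using f unfolding SS_def by (auto simp: PiE_iff) (fastforce)
      moreover have "f = ?h ?g"
      proof (rule ext)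
        fix x show "f x = ?h ?g x"
          using f by (cases "x \<in> A") (auto simp: SS_def PiE_iff extensional_def)
      qed
      ultimately show "f \<in> ?h ` SS k A R 1 m" by blast
    qed
  qed
  show ?thesis using card_image[OF inj] im by simp
qed

lemma mrg_inj:
  assumes "A \<inter> B = {}" "X \<subseteq> extensional A" "Y \<subseteq> extensional B"
  shows "inj_on (\<lambda>(g, h). mrg A g h) (X \<times> Y)"
proof (rule inj_onI, clarify)
  fix g h g' h' assume g: "g \<in> X" "g' \<in> X" and h: "h \<in> Y" "h' \<in> Y"
    and eq: "mrg A g h = mrg A g' h'"
  have "g x = g' x \<and> h x = h' x" for x
  proof (cases "x \<in> A")
    case True
    then have "x \<notin> B" using assms(1) by auto
    then have "h x = undefined" "h' x = undefined" using h assms(3) by (auto simp: extensional_def)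
    then show ?thesis using fun_cong[OF eq, of x] True by (simp add: mrg_def)
  next
    case False
    then have "g x = undefined" "g' x = undefined" using g assms(2) by (auto simp: extensional_def)
    then show ?thesis using fun_cong[OF eq, of x] False by (simp add: mrg_def)
  qed
  then show "g = g' \<and> h = h'" by auto
qed

lemma card_mrg:
  assumes "A \<inter> B = {}" "X \<subseteq> extensional A" "Y \<subseteq> extensional B"
  shows "card ((\<lambda>(g, h). mrg A g h) ` (X \<times> Y)) = card X * card Y"
  using card_image[OF mrg_inj[OF assms]] by (simp add: card_cartesian_product)

lemma SS_ext: "SS k A R L H \<subseteq> extensional A"
  unfolding SS_def by (auto simp: PiE_def)

lemma SS_par:
  assumes "A \<inter> B = {}" "R \<subseteq> A \<times> A" "S \<subseteq> B \<times> B"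
  shows "SS k (A \<union> B) (R \<union> S) 1 n = (\<lambda>(g, h). mrg A g h) ` (SS k A R 1 n \<times> SS k B S 1 n)"
proof
  show "SS k (A \<union> B) (R \<union> S) 1 n \<subseteq> (\<lambda>(g, h). mrg A g h) ` (SS k A R 1 n \<times> SS k B S 1 n)"
  proof
    fix f assume f: "f \<in> SS k (A \<union> B) (R \<union> S) 1 n"
    have "restrict f A \<in> SS k A R 1 n" "restrict f B \<in> SS k B S 1 n"
      using f unfolding SS_def by (auto simp: PiE_iff)
    moreover have "f = mrg A (restrict f A) (restrict f B)"
      using f by (auto simp: SS_def mrg_def PiE_iff extensional_def)
    ultimately show "f \<in> (\<lambda>(g, h). mrg A g h) ` (SS k A R 1 n \<times> SS k B S 1 n)" by force
  qed
next
  show "(\<lambda>(g, h). mrg A g h) ` (SS k A R 1 n \<times> SS k B S 1 n) \<subseteq> SS k (A \<union> B) (R \<union> S) 1 n"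
  proof clarify
    fix g h assume g: "g \<in> SS k A R 1 n" and h: "h \<in> SS k B S 1 n"
    show "mrg A g h \<in> SS k (A \<union> B) (R \<union> S) 1 n"
      unfolding SS_def mem_Collect_eq
    proof
      show "mrg A g h \<in> A \<union> B \<rightarrow>\<^sub>E {1..n}"
        using g h by (auto simp: SS_def mrg_def PiE_iff extensional_def)
      show "\<forall>u\<in>A \<union> B. \<forall>v\<in>A \<union> B. (u, v) \<in> R \<union> S \<longrightarrow> mrg A g h u + k \<le> mrg A g h v"
        using g h assms by (auto simp: SS_def mrg_def)
    qed
  qed
qed

lemma D_max:
  assumes g: "g \<in> SS k A R 1 t - SS k A R 1 (t - 1)" and fin: "finite A"
  shows "Max (g ` A) = t" "A \<noteq> {}"
proof -
  have le: "\<forall>x\<in>A. g x \<le> t" using g by (auto simp: SS_def PiE_iff)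
  have ex: "\<exists>x\<in>A. g x = t"
  proof (rule ccontr)
    assume "\<not> ?thesis"
    then have "\<forall>x\<in>A. g x \<le> t - 1" using le by fastforce
    then have "g \<in> SS k A R 1 (t - 1)" using g by (auto simp: SS_def PiE_iff)
    then show False using g by simp
  qed
  then show "A \<noteq> {}" by auto
  show "Max (g ` A) = t"
    using le ex fin by (intro Max_eqI) auto
qed

lemma SS_ser:
  assumes "A \<inter> B = {}" "R \<subseteq> A \<times> A" "S \<subseteq> B \<times> B" "finite A" "A \<noteq> {}"
  shows "SS k (A \<union> B) (R \<union> S \<union> A \<times> B) 1 n
     = (\<Union>t\<in>{1..n}. (\<lambda>(g, h). mrg A g h) ` ((SS k A R 1 t - SS k A R 1 (t - 1)) \<times> SS k B S (t + k) n))"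
proof
  show "SS k (A \<union> B) (R \<union> S \<union> A \<times> B) 1 n
     \<subseteq> (\<Union>t\<in>{1..n}. (\<lambda>(g, h). mrg A g h) ` ((SS k A R 1 t - SS k A R 1 (t - 1)) \<times> SS k B S (t + k) n))"
  proof
    fix f assume f: "f \<in> SS k (A \<union> B) (R \<union> S \<union> A \<times> B) 1 n"
    define t where "t = Max (f ` A)"
    have "t \<in> f ` A" unfolding t_def using assms by (intro Max_in) auto
    then obtain a where a: "a \<in> A" "f a = t" by auto
    have tn: "t \<in> {1..n}" using f a by (auto simp: SS_def PiE_iff)
    have fle: "\<forall>x\<in>A. f x \<le> t" unfolding t_def using assms by auto
    have g1: "restrict f A \<in> SS k A R 1 t"
      using f fle unfolding SS_def by (auto simp: PiE_iff)
    have g2: "restrict f A \<notin> SS k A R 1 (t - 1)"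
    proof
      assume "restrict f A \<in> SS k A R 1 (t - 1)"
      then have "restrict f A a \<in> {1..t - 1}" using a(1) unfolding SS_def by blast
      then show False using a tn by auto
    qed
    have h: "restrict f B \<in> SS k B S (t + k) n"
    proof -
      have "\<forall>v\<in>B. f a + k \<le> f v" using f a assms(1) unfolding SS_def by blast
      then show ?thesis using f a unfolding SS_def by (auto simp: PiE_iff)
    qed
    have "f = mrg A (restrict f A) (restrict f B)"
      using f by (auto simp: SS_def mrg_def PiE_iff extensional_def)
    then show "f \<in> (\<Union>t\<in>{1..n}. (\<lambda>(g, h). mrg A g h) ` ((SS k A R 1 t - SS k A R 1 (t - 1)) \<times> SS k B S (t + k) n))"
      using tn g1 g2 h by force
  qed
next
  show "(\<Union>t\<in>{1..n}. (\<lambda>(g, h). mrg A g h) ` ((SS k A R 1 t - SS k A R 1 (t - 1)) \<times> SS k B S (t + k) n))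
      \<subseteq> SS k (A \<union> B) (R \<union> S \<union> A \<times> B) 1 n"
  proof clarify
    fix t g h assume t: "t \<in> {1..n}" and g: "g \<in> SS k A R 1 t" "g \<notin> SS k A R 1 (t - 1)"
      and h: "h \<in> SS k B S (t + k) n"
    show "mrg A g h \<in> SS k (A \<union> B) (R \<union> S \<union> A \<times> B) 1 n"
      unfolding SS_def mem_Collect_eq
    proof
      show "mrg A g h \<in> A \<union> B \<rightarrow>\<^sub>E {1..n}"
        using g h t by (auto simp: SS_def mrg_def PiE_iff extensional_def)
      have gt: "\<forall>x\<in>A. g x \<le> t" using g by (auto simp: SS_def PiE_iff)
      have ht: "\<forall>x\<in>B. t + k \<le> h x" using h by (auto simp: SS_def PiE_iff)
      show "\<forall>u\<in>A \<union> B. \<forall>v\<in>A \<union> B. (u, v) \<in> R \<union> S \<union> A \<times> B \<longrightarrow> mrg A g h u + k \<le> mrg A g h v"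
      proof (intro ballI impI)
        fix u v assume uv: "u \<in> A \<union> B" "v \<in> A \<union> B" "(u, v) \<in> R \<union> S \<union> A \<times> B"
        show "mrg A g h u + k \<le> mrg A g h v"
        proof -
          { assume "(u, v) \<in> R" then have ?thesis using g assms(2) by (auto simp: SS_def mrg_def) }
          moreover
          { assume "(u, v) \<in> S" then have ?thesis using h assms(1,3) by (auto simp: SS_def mrg_def) }
          moreover
          { assume "(u, v) \<in> A \<times> B" then have ?thesis using gt ht assms(1)
              by (auto simp: mrg_def) (metis add_le_mono1 le_trans disjoint_iff) }
          ultimately show ?thesis using uv by blast
        qed
      qed
    qed
  qed
qed

lemma card_ser:
  assumes "A \<inter> B = {}" "R \<subseteq> A \<times> A" "S \<subseteq> B \<times> B" "finite A" "A \<noteq> {}" "finite B" "k \<le> 1"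
  shows "card (SS k (A \<union> B) (R \<union> S \<union> A \<times> B) 1 n)
     = (\<Sum>t = 1..n. (card (SS k A R 1 t) - card (SS k A R 1 (t - 1))) * card (SS k B S 1 (n + 1 - t - k)))"
proof -
  let ?F = "\<lambda>t. (\<lambda>(g, h). mrg A g h) ` ((SS k A R 1 t - SS k A R 1 (t - 1)) \<times> SS k B S (t + k) n)"
  have fin: "\<forall>t\<in>{1..n}. finite (?F t)"
    using assms by (auto intro!: finite_imageI finite_cartesian_product finite_SS)
  have disj: "\<forall>t\<in>{1..n}. \<forall>t'\<in>{1..n}. t \<noteq> t' \<longrightarrow> ?F t \<inter> ?F t' = {}"
  proof (intro ballI impI)
    fix t t' :: nat assume "t \<noteq> t'"
    show "?F t \<inter> ?F t' = {}"
    proof (rule ccontr)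
      assume "?F t \<inter> ?F t' \<noteq> {}"
      then obtain g h g' h' where g: "g \<in> SS k A R 1 t - SS k A R 1 (t - 1)"
        and g': "g' \<in> SS k A R 1 t' - SS k A R 1 (t' - 1)" and eq: "mrg A g h = mrg A g' h'"
        by auto
      have "g ` A = (mrg A g h) ` A" "g' ` A = (mrg A g' h') ` A" by (auto simp: mrg_def)
      then have "g ` A = g' ` A" using eq by simp
      then show False using D_max(1)[OF g assms(4)] D_max(1)[OF g' assms(4)] \<open>t \<noteq> t'\<close> by simp
    qed
  qed
  have "card (SS k (A \<union> B) (R \<union> S \<union> A \<times> B) 1 n) = (\<Sum>t = 1..n. card (?F t))"
    unfolding SS_ser[OF assms(1-5)] by (rule card_UN_disjoint[OF finite_atLeastAtMost fin disj])
  also have "\<dots> = (\<Sum>t = 1..n. (card (SS k A R 1 t) - card (SS k A R 1 (t - 1))) * card (SS k B S 1 (n + 1 - t - k)))"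
  proof (intro sum.cong refl)
    fix t assume t: "t \<in> {1..n}"
    have 1: "card (?F t) = card (SS k A R 1 t - SS k A R 1 (t - 1)) * card (SS k B S (t + k) n)"
      using SS_ext assms(1) by (intro card_mrg) blast+
    have 2: "card (SS k A R 1 t - SS k A R 1 (t - 1)) = card (SS k A R 1 t) - card (SS k A R 1 (t - 1))"
      using assms(4) by (intro card_Diff_subset finite_SS SS_mono) auto
    have 3: "SS k B S (t + k) n = SS k B S ((t + k - 1) + 1) ((t + k - 1) + (n + 1 - t - k))"
      using t assms(7) by (auto intro!: arg_cong2[where f="SS k B S"])
    have 4: "card (SS k B S (t + k) n) = card (SS k B S 1 (n + 1 - t - k))" unfolding 3 by (rule card_shift)
    show "card (?F t) = (card (SS k A R 1 t) - card (SS k A R 1 (t - 1))) * card (SS k B S 1 (n + 1 - t - k))"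
      unfolding 1 2 4 ..
  qed
  finally show ?thesis .
qed


lemma card_SS_0: "A \<noteq> {} \<Longrightarrow> card (SS k A R 1 0) = 0"
proof -
  assume "A \<noteq> {}"
  then have "(A \<rightarrow>\<^sub>E {1..0::nat}) = {}" by (auto simp: PiE_eq_empty_iff)
  then show ?thesis unfolding SS_def by simp
qed

lemma card_SS_mono: "finite A \<Longrightarrow> H \<le> H' \<Longrightarrow> card (SS k A R 1 H) \<le> card (SS k A R 1 H')"
  by (intro card_mono finite_SS SS_mono)

lemma ser_real:
  assumes "A \<inter> B = {}" "R \<subseteq> A \<times> A" "S \<subseteq> B \<times> B" "finite A" "A \<noteq> {}" "finite B" "k \<le> 1"
  shows "real (card (SS k (A \<union> B) (R \<union> S \<union> A \<times> B) 1 n))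
     = (\<Sum>t = 1..n. (real (card (SS k A R 1 t)) - real (card (SS k A R 1 (t - 1)))) * real (card (SS k B S 1 (n + 1 - t - k))))"
  unfolding card_ser[OF assms] of_nat_sum of_nat_mult
  using card_SS_mono[OF assms(4), of "t - 1" t for t]
  by (intro sum.cong refl) (simp add: of_nat_diff)

lemma recip:
  assumes "series_parallel A R"
  shows "\<exists>P. (\<forall>n. real (Omega A R n) = poly P (real n))
           \<and> (\<forall>n. real (Omega_plus A R n) = (-1) ^ card A * poly P (- real n))"
  using assms
proof (induction rule: series_parallel.induct)
  case (sp_single a)
  have c: "card (SS k {a} {} 1 n) = n" for k n by (rule card_SS_single)
  show ?case
    unfolding Omega_SS Omega_plus_SS c by (intro exI[of _ "[:0, 1:]"]) simp
next
  case (sp_par A R B S)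
  obtain PA where PA: "\<And>n. real (Omega A R n) = poly PA (real n)"
    "\<And>n. real (Omega_plus A R n) = (-1) ^ card A * poly PA (- real n)" using sp_par.IH(1) by blast
  obtain PB where PB: "\<And>n. real (Omega B S n) = poly PB (real n)"
    "\<And>n. real (Omega_plus B S n) = (-1) ^ card B * poly PB (- real n)" using sp_par.IH(2) by blast
  have iA: "finite A" "A \<noteq> {}" "R \<subseteq> A \<times> A" using sp_inv[OF sp_par.hyps(1)] by auto
  have iB: "finite B" "B \<noteq> {}" "S \<subseteq> B \<times> B" using sp_inv[OF sp_par.hyps(2)] by auto
  have cnt: "card (SS k (A \<union> B) (R \<union> S) 1 n) = card (SS k A R 1 n) * card (SS k B S 1 n)" for k n
    unfolding SS_par[OF sp_par.hyps(3) iA(3) iB(3)]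
    using SS_ext sp_par.hyps(3) by (intro card_mrg) blast+
  have cAB: "card (A \<union> B) = card A + card B" using iA iB sp_par.hyps(3) by (simp add: card_Un_disjoint)
  show ?case
  proof (intro exI[of _ "PA * PB"] conjI allI)
    fix n
    show "real (Omega (A \<union> B) (R \<union> S) n) = poly (PA * PB) (real n)"
      using PA(1)[of n] PB(1)[of n] unfolding Omega_SS cnt by simp
    show "real (Omega_plus (A \<union> B) (R \<union> S) n) = (-1) ^ card (A \<union> B) * poly (PA * PB) (- real n)"
      using PA(2)[of n] PB(2)[of n] unfolding Omega_plus_SS cnt cAB by (simp add: power_add)
  qed
next
  case (sp_ser A R B S)
  obtain PA where PA: "\<And>n. real (Omega A R n) = poly PA (real n)"
    "\<And>n. real (Omega_plus A R n) = (-1) ^ card A * poly PA (- real n)" using sp_ser.IH(1) by blast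
  obtain PB where PB: "\<And>n. real (Omega B S n) = poly PB (real n)"
    "\<And>n. real (Omega_plus B S n) = (-1) ^ card B * poly PB (- real n)" using sp_ser.IH(2) by blast
  have iA: "finite A" "A \<noteq> {}" "R \<subseteq> A \<times> A" using sp_inv[OF sp_ser.hyps(1)] by auto
  have iB: "finite B" "B \<noteq> {}" "S \<subseteq> B \<times> B" using sp_inv[OF sp_ser.hyps(2)] by auto
  have cAB: "card (A \<union> B) = card A + card B" using iA iB sp_ser.hyps(3) by (simp add: card_Un_disjoint)
  have A0: "poly PA 0 = 0" using PA(1)[of 0] card_SS_0[OF iA(2)] by (simp add: Omega_SS)
  have B0: "poly PB 0 = 0" using PB(1)[of 0] card_SS_0[OF iB(2)] by (simp add: Omega_SS)
  obtain P where P1: "\<And>n. (\<Sum>t = 1..n. (poly PA (real t) - poly PA (real (t - 1))) * poly PB (real (n - t))) = poly P (real n)"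
    and P2: "\<And>n. (\<Sum>t = 1..n. (poly PA (- real t) - poly PA (- real (t - 1))) * poly PB (- real (n + 1 - t))) = poly P (- real n)"
    using series_alg[OF A0 B0] by blast
  note sr = ser_real[OF sp_ser.hyps(3) iA(3) iB(3) iA(1) iA(2) iB(1)]
  show ?case
  proof (intro exI[of _ P] conjI allI)
    fix n
    have "real (Omega (A \<union> B) (R \<union> S \<union> A \<times> B) n)
       = (\<Sum>t = 1..n. (real (Omega A R t) - real (Omega A R (t - 1))) * real (Omega B S (n + 1 - t - 1)))"
      unfolding Omega_SS by (rule sr) simp
    also have "\<dots> = (\<Sum>t = 1..n. (poly PA (real t) - poly PA (real (t - 1))) * poly PB (real (n - t)))"
      by (simp add: PA PB)
    finally show "real (Omega (A \<union> B) (R \<union> S \<union> A \<times> B) n) = poly P (real n)" using P1 by simp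
    have "real (Omega_plus (A \<union> B) (R \<union> S \<union> A \<times> B) n)
       = (\<Sum>t = 1..n. (real (Omega_plus A R t) - real (Omega_plus A R (t - 1))) * real (Omega_plus B S (n + 1 - t - 0)))"
      unfolding Omega_plus_SS by (rule sr) simp
    also have "\<dots> = (\<Sum>t = 1..n. (-1) ^ (card A + card B) * ((poly PA (- real t) - poly PA (- real (t - 1))) * poly PB (- real (n + 1 - t))))"
      by (intro sum.cong refl) (simp add: PA PB power_add algebra_simps)
    also have "\<dots> = (-1) ^ card (A \<union> B) * poly P (- real n)"
      unfolding cAB sum_distrib_left[symmetric] P2 ..
    finally show "real (Omega_plus (A \<union> B) (R \<union> S \<union> A \<times> B) n) = (-1) ^ card (A \<union> B) * poly P (- real n)" .
  qed
qed

unbundle fps_syntax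

lemma sp_nonempty: "series_parallel A R \<Longrightarrow> A \<noteq> {} \<and> finite A"
  by (induction rule: series_parallel.induct) auto

lemma Omega_0: "A \<noteq> {} \<Longrightarrow> Omega A R 0 = 0"
proof -
  assume "A \<noteq> {}"
  then have "(A \<rightarrow>\<^sub>E {1..0::nat}) = {}" by (auto simp: PiE_eq_empty_iff)
  then show ?thesis unfolding Omega_def by simp
qed

lemma poly_agree_nat:
  fixes p q :: "real poly"
  assumes "\<And>n::nat. poly p (real n) = poly q (real n)"
  shows "p = q"
proof (rule ccontr)
  assume "p \<noteq> q"
  then have "p - q \<noteq> 0" by simp
  then have "finite {x. poly (p - q) x = 0}" by (rule poly_roots_finite)
  moreover have "range real \<subseteq> {x. poly (p - q) x = 0}" using assms by auto
  ultimately have "finite (range real)" by (rule finite_subset[rotated])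
  then show False by (simp add: finite_image_iff inj_on_def)
qed

lemma inv_pow: "inverse ((1 - fps_X) ^ (i + 1) :: real fps) = Abs_fps (\<lambda>k. of_nat ((i + k) choose i))"
proof -
  have "inverse ((1 - fps_const 1 * fps_X) ^ (i + 1) :: real fps) = Abs_fps (\<lambda>k. of_nat (((i+1) + k - 1) choose k) * 1^k)"
    by (rule one_minus_const_fps_X_neg_power') simp
  then show ?thesis by (simp add: binomial_symmetric[of i "i+_"] fps_eq_iff)
qed

lemma coeff_term: "(fps_X ^ i * inverse ((1 - fps_X) ^ (i + 1) :: real fps)) $ n = of_nat (n choose i)"
  unfolding fps_X_power_mult_nth inv_pow by (auto simp: binomial_eq_0)

lemma one_minus_X_pow_nth: "((1 - fps_X) ^ m :: real fps) $ j = (-1) ^ j * of_nat (m choose j)"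
proof (induction m arbitrary: j)
  case 0 then show ?case by (simp add: fps_one_nth)
next
  case (Suc m)
  have "((1 - fps_X) ^ Suc m :: real fps) = (1 - fps_X) ^ m - fps_X * (1 - fps_X) ^ m"
    by (simp add: algebra_simps)
  then show ?case
    by (cases j) (simp_all add: Suc algebra_simps)
qed

lemma alt_sum_ext:
  assumes "m \<le> N"
  shows "(\<Sum>j = 0..N. (-1) ^ j * real (m choose j)) = (if m = 0 then 1 else 0)"
proof -
  have "(\<Sum>j = 0..N. (-1) ^ j * real (m choose j)) = (\<Sum>j \<le> m. (-1) ^ j * real (m choose j))"
    using assms by (intro sum.mono_neutral_right) auto
  also have "\<dots> = (if m = 0 then 1 else 0)"
    using choose_alternating_sum[of m, where 'a=real] by auto
  finally show ?thesis .
qed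

theorem proposition2p11:
  fixes A :: "'a set" and R :: "('a \<times> 'a) set" and c :: "nat \<Rightarrow> real"
  assumes sp: "series_parallel A R"
    and c: "ZX A R = (\<Sum>i = 1..card A. fps_const (c i) * fps_X ^ i
                         * inverse ((1 - fps_X) ^ (i + 1)))"
  shows "(\<forall>j > card A. fps_nth (hstar A R) j = 0)
    \<and> (\<forall>j \<le> card A. fps_nth (hstar A R) j =
          (\<Sum>i = 1..card A - j. (-1) ^ (card A - i + j) * c i * real (card A - i choose j)))
    \<and> c (card A) = (\<Sum>i = 0..card A. fps_nth (hstar A R) i)"
proof -
  define N where "N = card A"
  obtain P where P1: "\<And>n. real (Omega A R n) = poly P (real n)"
    and P2: "\<And>n. real (Omega_plus A R n) = (-1) ^ N * poly P (- real n)"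
    using recip[OF sp] N_def by blast
  have ne: "A \<noteq> {}" using sp_nonempty[OF sp] by simp
  define Q where "Q = (\<Sum>i = 1..N. smult (c i) (Gpoly i))"
  have Qn: "poly Q x = (\<Sum>i = 1..N. c i * (x gchoose i))" for x
    by (simp add: Q_def poly_sum poly_Gpoly)
  have "poly P (real n) = poly Q (real n)" for n
  proof (cases "n = 0")
    case True
    have "\<forall>i\<in>{1..N}. c i * (0 gchoose i) = 0"
      by (auto simp: gbinomial_0 elim!: Suc_le_D[THEN exE])
    then have "poly Q 0 = 0" unfolding Qn by (intro sum.neutral) simp
    then show ?thesis using P1[of 0] Omega_0[OF ne, of R] True by simp
  next
    case False
    have "real (Omega A R n) = ZX A R $ n" using False by (simp add: ZX_def)
    also have "\<dots> = (\<Sum>i = 1..N. c i * of_nat (n choose i))"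
      unfolding c N_def[symmetric] fps_sum_nth using coeff_term
      by (simp add: mult.assoc)
    also have "\<dots> = poly Q (real n)" by (simp add: Qn binomial_gbinomial)
    finally show ?thesis using P1 by simp
  qed
  then have PQ: "P = Q" by (rule poly_agree_nat)
  define G where "G = (\<Sum>i = 1..N. fps_const (c i * (-1) ^ (N + i)) * inverse ((1 - fps_X) ^ (i + 1) :: real fps))"
  have ZP: "ZX_plus A R = fps_X * G"
  proof (rule fps_ext)
    fix n
    show "ZX_plus A R $ n = (fps_X * G) $ n"
    proof (cases "n = 0")
      case True then show ?thesis by (simp add: ZX_plus_def)
    next
      case False
      have "ZX_plus A R $ n = (-1) ^ N * poly Q (- real n)"
        using False P2 PQ by (simp add: ZX_plus_def)
      also have "\<dots> = (\<Sum>i = 1..N. c i * (-1) ^ (N + i) * of_nat ((i + (n - 1)) choose i))"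
      proof -
        have "(- real n gchoose i) = (-1) ^ i * of_nat ((i + (n - 1)) choose i)" for i
          using False by (simp add: gbinomial_minus binomial_gbinomial of_nat_diff algebra_simps)
        then show ?thesis by (simp add: Qn sum_distrib_left power_add algebra_simps)
      qed
      also have "\<dots> = (fps_X * G) $ n"
        using False unfolding G_def fps_X_mult_nth fps_sum_nth fps_mult_left_const_nth inv_pow
        by (simp add: add.commute)
      finally show ?thesis .
    qed
  qed
  have HG: "hstar A R = (\<Sum>i = 1..N. fps_const (c i * (-1) ^ (N + i)) * (1 - fps_X) ^ (N - i))"
  proof -
    have "(1 - fps_X) ^ (N + 1) * G = (\<Sum>i = 1..N. fps_const (c i * (-1) ^ (N + i)) * (1 - fps_X) ^ (N - i))"
      unfolding G_def sum_distrib_left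
    proof (rule sum.cong[OF refl])
      fix i assume "i \<in> {1..N}"
      then have "(1 - fps_X) ^ (N + 1) = ((1 - fps_X) ^ (N - i) :: real fps) * (1 - fps_X) ^ (i + 1)"
        by (simp flip: power_add)
      moreover have "(1 - fps_X) ^ (i + 1) * inverse ((1 - fps_X) ^ (i + 1)) = (1 :: real fps)"
        by (simp add: inverse_mult_eq_1')
      ultimately show "(1 - fps_X) ^ (N + 1) * (fps_const (c i * (-1) ^ (N + i)) * inverse ((1 - fps_X) ^ (i + 1)))
          = fps_const (c i * (-1) ^ (N + i)) * (1 - fps_X) ^ (N - i)"
        by (metis (no_types, lifting) mult.assoc mult.commute mult.right_neutral)
    qed
    then show ?thesis
      unfolding hstar_def N_def[symmetric] ZP
      by (metis (no_types, lifting) fps_shift_times_fps_X' mult.assoc mult.commute)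
  qed
  have H: "hstar A R $ j = (\<Sum>i = 1..N. c i * (-1) ^ (N + i) * ((-1) ^ j * real ((N - i) choose j)))" for j
    unfolding HG fps_sum_nth by (simp add: one_minus_X_pow_nth)
  have part1: "\<forall>j > N. hstar A R $ j = 0"
    unfolding H by (auto intro!: sum.neutral simp: binomial_eq_0)
  have part2: "\<forall>j \<le> N. hstar A R $ j =
          (\<Sum>i = 1..N - j. (-1) ^ (N - i + j) * c i * real (N - i choose j))"
  proof (intro allI impI)
    fix j assume "j \<le> N"
    have "hstar A R $ j = (\<Sum>i = 1..N - j. c i * (-1) ^ (N + i) * ((-1) ^ j * real ((N - i) choose j)))"
      unfolding H using \<open>j \<le> N\<close> by (intro sum.mono_neutral_right) (auto simp: binomial_eq_0)
    also have "\<dots> = (\<Sum>i = 1..N - j. (-1) ^ (N - i + j) * c i * real (N - i choose j))"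
    proof (rule sum.cong[OF refl])
      fix i assume "i \<in> {1..N - j}"
      then have "N + i = (N - i + j) + 2 * i - j" by auto
      have "(-1::real) ^ (N + i) * (-1) ^ j = (-1) ^ (N - i + j)"
      proof -
        have eq: "N + i + j = (N - i + j) + 2 * i" using \<open>i \<in> {1..N - j}\<close> by auto
        have "(-1::real) ^ (N + i + j) = (-1) ^ (N - i + j)" unfolding eq power_add power_mult by simp
        then show ?thesis by (metis power_add)
      qed
      then show "c i * (-1) ^ (N + i) * ((-1) ^ j * real (N - i choose j)) = (-1) ^ (N - i + j) * c i * real (N - i choose j)"
        by (metis (no_types, lifting) mult.assoc mult.commute)
    qed
    finally show "hstar A R $ j = (\<Sum>i = 1..N - j. (-1) ^ (N - i + j) * c i * real (N - i choose j))" .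
  qed
  have part3: "c N = (\<Sum>j = 0..N. hstar A R $ j)"
  proof -
    have "(\<Sum>j = 0..N. hstar A R $ j) = (\<Sum>i = 1..N. c i * (-1) ^ (N + i) * (\<Sum>j = 0..N. (-1) ^ j * real ((N - i) choose j)))"
      unfolding H by (simp add: sum_distrib_left sum.swap[of _ "{0..N}"])
    also have "\<dots> = (\<Sum>i = 1..N. if i = N then c i else 0)"
      by (intro sum.cong[OF refl]) (auto simp: alt_sum_ext)
    also have "\<dots> = c N" using ne sp_nonempty[OF sp] N_def by (simp add: card_gt_0_iff Suc_le_eq)
    finally show ?thesis by simp
  qed
  show ?thesis using part1 part2 part3 unfolding N_def by blast
qed

end
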